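(* Let $k'>k$ be natural numbers and let $\mathcal D$ be a class of $k$-ary upwards-closed (not necessarily first-order) dependency notions. Then the $k'$-ary totality atom $\mathrm{All}_{k'}$ is not definable in $\mathbf{FO}(=\!(\cdot),\mathcal D,\sqcup)$.
   Context: Team semantics (lax version). For a structure $\mathfrak M$ with domain $M$, a team $X$ is a (possibly empty) set of assignments $s:V\to M$, $V$ a finite set of variables; for a tuple $\vec v$ of variables in $V$, $X(\vec v)=\{s(\vec v):s\in X\}$. Satisfaction for formulas in negation normal form: first-order literal $\alpha$: every $s\in X$ satisfies $\alpha$ (Tarski); $\psi\vee\theta$: $X=Y\cup Z$ with $\mathfrak M\models_Y\psi$, $\mathfrak M\models_Z\theta$; $\psi\wedge\theta$: both; $\exists v\psi$: some $F:X\to\mathcal P(M)\setminus\{\emptyset\}$ with $\mathfrak M\models_{X[F/v]}\psi$, $X[F/v]=\{s[m/v]:s\in X,m\in F(s)\}$; $\forall v\psi$: $\mathfrak M\models_{X[M/v]}\psi$, $X[M/v]=\{s[m/v]:s\in X,m\in M\}$. A $k$-ary dependency notion $\mathbf D$ is an isomorphism-closed class of structures $(M,R)$ with $R$ a $k$-ary relation; the atom $\mathbf D\vec v$ (for a $k$-tuple $\vec v$ of variables) satisfies $\mathfrak M\models_X\mathbf D\vec v$ iff $(M,X(\vec v))\in\mathbf D$. $\mathbf D$ is upwards-closed if $(M,R)\in\mathbf D$ and $R\subseteq S$ imply $(M,S)\in\mathbf D$. The constancy atoms $=\!(\vec v)$ (all arities): $\mathfrak M\models_X=\!(\vec v)$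 iff $s(\vec v)=s'(\vec v)$ for all $s,s'\in X$. The $k'$-ary totality atom: $\mathfrak M\models_X\mathrm{All}_{k'}(\vec v)$ iff $X(\vec v)=M^{k'}$. Classical disjunction: $\mathfrak M\models_X\phi\sqcup\psi$ iff $\mathfrak M\models_X\phi$ or $\mathfrak M\models_X\psi$. A $k'$-ary dependency $\mathbf E$ is definable in a logic $L$ if there is a formula $\theta(\vec v)$ of $L$ over the empty vocabulary, with $\vec v$ a tuple of $k'$ distinct variables, such that $\mathfrak M\models_X\mathbf E\vec v$ iff $\mathfrak M\models_X\theta(\vec v)$ for all structures $\mathfrak M$ and all teams $X$ whose domain contains $\vec v$. *)

theory Defs
  imports Main
begin

text \<open>Structures over the empty vocabulary are nonempty domains M :: 'a set.\<close>

type_synonym 'a assign = "nat \<Rightarrow> 'a option"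
type_synonym 'a team = "'a assign set"

definition tuples :: "'a set \<Rightarrow> nat \<Rightarrow> 'a list set" where
  "tuples M n = {xs. length xs = n \<and> set xs \<subseteq> M}"

definition is_team :: "'a set \<Rightarrow> nat set \<Rightarrow> 'a team \<Rightarrow> bool" where
  "is_team M V X \<longleftrightarrow> (\<forall>s\<in>X. dom s = V \<and> ran s \<subseteq> M)"

definition team_rel :: "'a team \<Rightarrow> nat list \<Rightarrow> 'a list set" where
  "team_rel X vs = {map (\<lambda>x. the (s x)) vs | s. s \<in> X}"

definition is_dep_notion :: "nat \<Rightarrow> ('a set \<times> 'a list set) set \<Rightarrow> bool" where
  "is_dep_notion k D \<longleftrightarrow>
     (\<forall>M R. (M, R) \<in> D \<longrightarrow> M \<noteq> {} \<and> R \<subseteq> tuples M k) \<and>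
     (\<forall>M R N f. (M, R) \<in> D \<longrightarrow> bij_betw f M N \<longrightarrow> (N, map f ` R) \<in> D)"

definition upwards_closed :: "nat \<Rightarrow> ('a set \<times> 'a list set) set \<Rightarrow> bool" where
  "upwards_closed k D \<longleftrightarrow>
     (\<forall>M R S. (M, R) \<in> D \<longrightarrow> R \<subseteq> S \<longrightarrow> S \<subseteq> tuples M k \<longrightarrow> (M, S) \<in> D)"

text \<open>Formulas of FO(=(.), D, \<squnion>) over the empty vocabulary, in negation normal form.\<close>
datatype 'd fml =
    Eq nat nat
  | NEq nat nat
  | Const "nat list"
  | DAtom 'd "nat list"
  | Or "'d fml" "'d fml"
  | And "'d fml" "'d fml"
  | Ex nat "'d fml"
  | All nat "'d fml"
  | CDisj "'d fml" "'d fml"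

primrec fv :: "'d fml \<Rightarrow> nat set" where
  "fv (Eq x y) = {x, y}"
| "fv (NEq x y) = {x, y}"
| "fv (Const vs) = set vs"
| "fv (DAtom D vs) = set vs"
| "fv (Or a b) = fv a \<union> fv b"
| "fv (And a b) = fv a \<union> fv b"
| "fv (Ex v a) = fv a - {v}"
| "fv (All v a) = fv a - {v}"
| "fv (CDisj a b) = fv a \<union> fv b"

primrec wf_fml :: "nat \<Rightarrow> ('a set \<times> 'a list set) set set
                    \<Rightarrow> ('a set \<times> 'a list set) set fml \<Rightarrow> bool" where
  "wf_fml k \<D> (Eq x y) = True"
| "wf_fml k \<D> (NEq x y) = True"
| "wf_fml k \<D> (Const vs) = True"
| "wf_fml k \<D> (DAtom D vs) = (D \<in> \<D> \<and> length vs = k)"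
| "wf_fml k \<D> (Or a b) = (wf_fml k \<D> a \<and> wf_fml k \<D> b)"
| "wf_fml k \<D> (And a b) = (wf_fml k \<D> a \<and> wf_fml k \<D> b)"
| "wf_fml k \<D> (Ex v a) = wf_fml k \<D> a"
| "wf_fml k \<D> (All v a) = wf_fml k \<D> a"
| "wf_fml k \<D> (CDisj a b) = (wf_fml k \<D> a \<and> wf_fml k \<D> b)"

primrec sat :: "'a set \<Rightarrow> 'a team \<Rightarrow> ('a set \<times> 'a list set) set fml \<Rightarrow> bool" where
  "sat M X (Eq x y) = (\<forall>s\<in>X. s x = s y)"
| "sat M X (NEq x y) = (\<forall>s\<in>X. s x \<noteq> s y)"
| "sat M X (Const vs) = (\<forall>s\<in>X. \<forall>s'\<in>X. map s vs = map s' vs)"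
| "sat M X (DAtom D vs) = ((M, team_rel X vs) \<in> D)"
| "sat M X (Or a b) = (\<exists>Y Z. X = Y \<union> Z \<and> sat M Y a \<and> sat M Z b)"
| "sat M X (And a b) = (sat M X a \<and> sat M X b)"
| "sat M X (Ex v a) = (\<exists>F. (\<forall>s\<in>X. F s \<noteq> {} \<and> F s \<subseteq> M) \<and>
                         sat M {s(v := Some m) | s m. s \<in> X \<and> m \<in> F s} a)"
| "sat M X (All v a) = sat M {s(v := Some m) | s m. s \<in> X \<and> m \<in> M} a"
| "sat M X (CDisj a b) = (sat M X a \<or> sat M X b)"

definition totality :: "nat \<Rightarrow> 'a set \<Rightarrow> 'a list set \<Rightarrow> bool" where
  "totality k' M R \<longleftrightarrow> R = tuples M k'"

definition definable ::
  "nat \<Rightarrow> ('a set \<times> 'a list set) set set \<Rightarrow> nat \<Rightarrow> ('a set \<Rightarrow> 'a list set \<Rightarrow> bool) \<Rightarrow> bool" where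
  "definable k \<D> k' E \<longleftrightarrow>
    (\<exists>\<theta> vs. wf_fml k \<D> \<theta> \<and> length vs = k' \<and> distinct vs \<and> fv \<theta> \<subseteq> set vs \<and>
      (\<forall>M V X. M \<noteq> {} \<longrightarrow> finite V \<longrightarrow> set vs \<subseteq> V \<longrightarrow> is_team M V X \<longrightarrow>
         (E M (team_rel X vs) \<longleftrightarrow> sat M X \<theta>)))"

end

theory Submission
  imports Defs
begin

primrec natoms :: "'d fml \<Rightarrow> nat" where
  "natoms (Eq x y) = 0"
| "natoms (NEq x y) = 0"
| "natoms (Const vs) = 0"
| "natoms (DAtom D vs) = 1"
| "natoms (Or a b) = natoms a + natoms b"
| "natoms (And a b) = natoms a + natoms b"
| "natoms (Ex v a) = natoms a"
| "natoms (All v a) = natoms a"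
| "natoms (CDisj a b) = natoms a + natoms b"

lemma team_rel_mono: "Y \<subseteq> X \<Longrightarrow> team_rel Y w \<subseteq> team_rel X w"
  unfolding team_rel_def by blast

lemma team_rel_memI: "s \<in> Y \<Longrightarrow> map (\<lambda>x. the (s x)) w = t \<Longrightarrow> t \<in> team_rel Y w"
  unfolding team_rel_def by blast

lemma team_rel_tuples:
  assumes "\<forall>s\<in>X. ran s \<subseteq> M" "the None \<in> M"
  shows "team_rel X w \<subseteq> tuples M (length w)"
proof
  fix t assume "t \<in> team_rel X w"
  then obtain s where s: "s \<in> X" "t = map (\<lambda>x. the (s x)) w" unfolding team_rel_def by blast
  have "the (s x) \<in> M" for x
  proof (cases "s x")
    case None then show ?thesis using assms by simp
  next
    case (Some a) then have "a \<in> ran s" unfolding ran_def by blast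
    then show ?thesis using assms s Some by auto
  qed
  then show "t \<in> tuples M (length w)" using s unfolding tuples_def by auto
qed

lemma card_tuples: "finite M \<Longrightarrow> card (tuples M n) = card M ^ n"
  unfolding tuples_def using card_lists_length_eq[of M n] by (simp add: conj_commute)

lemma finite_tuples: "finite M \<Longrightarrow> finite (tuples M n)"
  unfolding tuples_def using finite_lists_length_eq[of M n] by (simp add: conj_commute)

lemma choose_W:
  assumes "finite (team_rel X w)"
  shows "\<exists>W. W \<subseteq> X \<and> team_rel W w = team_rel X w \<and> finite W \<and> card W \<le> card (team_rel X w)"
proof -
  define g where "g t = (SOME s. s \<in> X \<and> map (\<lambda>x. the (s x)) w = t)" for t
  have g: "g t \<in> X \<and> map (\<lambda>x. the (g t x)) w = t" if "t \<in> team_rel X w" for t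
  proof -
    have "\<exists>s. s \<in> X \<and> map (\<lambda>x. the (s x)) w = t" using that unfolding team_rel_def by blast
    then show ?thesis unfolding g_def by (rule someI_ex)
  qed
  let ?W = "g ` team_rel X w"
  have "?W \<subseteq> X" using g by blast
  moreover have "team_rel ?W w = team_rel X w"
  proof
    show "team_rel ?W w \<subseteq> team_rel X w" using team_rel_mono[OF \<open>?W \<subseteq> X\<close>] .
    show "team_rel X w \<subseteq> team_rel ?W w"
    proof
      fix t assume "t \<in> team_rel X w"
      then have "g t \<in> ?W" "map (\<lambda>x. the (g t x)) w = t" using g by auto
      then show "t \<in> team_rel ?W w" by (rule team_rel_memI)
    qed
  qed
  moreover have "finite ?W" using assms by blast
  moreover have "card ?W \<le> card (team_rel X w)" using assms by (rule card_image_le)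
  ultimately show ?thesis by blast
qed

lemma ran_upd_sub: "ran (s(v := Some m)) \<subseteq> insert m (ran s)"
  unfolding ran_def by auto

lemma key:
  assumes fin: "finite M" and none: "the None \<in> M"
  shows "wf_fml k \<D> \<psi> \<Longrightarrow> (\<forall>s\<in>X. ran s \<subseteq> M) \<Longrightarrow> sat M X \<psi> \<Longrightarrow> Y0 \<subseteq> X \<Longrightarrow>
    \<exists>Y1. Y0 \<subseteq> Y1 \<and> Y1 \<subseteq> X \<and> finite (Y1 - Y0) \<and> card (Y1 - Y0) \<le> natoms \<psi> * card M ^ k
        \<and> (\<forall>Y. Y1 \<subseteq> Y \<longrightarrow> Y \<subseteq> X \<longrightarrow> sat M Y \<psi>)"
proof (induction \<psi> arbitrary: X Y0)
  case (Eq x y)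
  show ?case
  proof (intro exI[of _ Y0] conjI allI impI)
    fix Y assume "Y0 \<subseteq> Y" "Y \<subseteq> X"
    then show "sat M Y (Eq x y)" using Eq.prems(3) by (simp only: sat.simps) blast
  qed (use Eq.prems in auto)
next
  case (NEq x y)
  show ?case
  proof (intro exI[of _ Y0] conjI allI impI)
    fix Y assume "Y0 \<subseteq> Y" "Y \<subseteq> X"
    then show "sat M Y (NEq x y)" using NEq.prems(3) by (simp only: sat.simps) blast
  qed (use NEq.prems in auto)
next
  case (Const vs)
  show ?case
  proof (intro exI[of _ Y0] conjI allI impI)
    fix Y assume "Y0 \<subseteq> Y" "Y \<subseteq> X"
    then show "sat M Y (Const vs)" using Const.prems(3) by (simp only: sat.simps) blast
  qed (use Const.prems in auto)
next
  case (DAtom D w)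
  have lw: "length w = k" using DAtom by simp
  have sub: "team_rel X w \<subseteq> tuples M k" using team_rel_tuples[of X M w] DAtom none lw by simp
  have ft: "finite (team_rel X w)" using sub finite_tuples[OF fin] finite_subset by blast
  have ct: "card (team_rel X w) \<le> card M ^ k"
    using card_mono[OF finite_tuples[OF fin] sub] card_tuples[OF fin] by simp
  obtain W where W: "W \<subseteq> X" "team_rel W w = team_rel X w" "finite W" "card W \<le> card (team_rel X w)"
    using choose_W[OF ft] by blast
  show ?case
  proof (intro exI[of _ "Y0 \<union> W"] conjI allI impI)
    show "Y0 \<subseteq> Y0 \<union> W" by blast
    show "Y0 \<union> W \<subseteq> X" using DAtom W by blast
    show "finite (Y0 \<union> W - Y0)" using W(3) by (rule finite_subset[rotated]) blast
    have "card (Y0 \<union> W - Y0) \<le> card W" using W by (intro card_mono) auto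
    then show "card (Y0 \<union> W - Y0) \<le> natoms (DAtom D w) * card M ^ k" using W ct by simp
  next
    fix Y assume "Y0 \<union> W \<subseteq> Y" "Y \<subseteq> X"
    then have "team_rel Y w = team_rel X w"
      using team_rel_mono[of W Y w] team_rel_mono[of Y X w] W by auto
    then show "sat M Y (DAtom D w)" using DAtom by simp
  qed
next
  case (Or a b)
  from Or.prems(3) obtain A B where AB: "X = A \<union> B" "sat M A a" "sat M B b" by auto
  have wfa: "wf_fml k \<D> a" and wfb: "wf_fml k \<D> b" using Or.prems(1) by auto
  have ranA: "\<forall>s\<in>A. ran s \<subseteq> M" and ranB: "\<forall>s\<in>B. ran s \<subseteq> M" using Or.prems(2) AB(1) by auto
  obtain A1 where A1: "Y0 \<inter> A \<subseteq> A1" "A1 \<subseteq> A" "finite (A1 - Y0 \<inter> A)"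
      "card (A1 - Y0 \<inter> A) \<le> natoms a * card M ^ k" "\<forall>Y. A1 \<subseteq> Y \<longrightarrow> Y \<subseteq> A \<longrightarrow> sat M Y a"
    using Or.IH(1)[OF wfa ranA AB(2) Int_lower2[of Y0 A]] by blast
  obtain B1 where B1: "Y0 \<inter> B \<subseteq> B1" "B1 \<subseteq> B" "finite (B1 - Y0 \<inter> B)"
      "card (B1 - Y0 \<inter> B) \<le> natoms b * card M ^ k" "\<forall>Y. B1 \<subseteq> Y \<longrightarrow> Y \<subseteq> B \<longrightarrow> sat M Y b"
    using Or.IH(2)[OF wfb ranB AB(3) Int_lower2[of Y0 B]] by blast
  have s: "A1 \<union> B1 - Y0 \<subseteq> (A1 - Y0 \<inter> A) \<union> (B1 - Y0 \<inter> B)" by blast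
  have f: "finite ((A1 - Y0 \<inter> A) \<union> (B1 - Y0 \<inter> B))" using A1(3) B1(3) by blast
  show ?case
  proof (intro exI[of _ "A1 \<union> B1"] conjI allI impI)
    show "Y0 \<subseteq> A1 \<union> B1" using A1(1) B1(1) AB(1) Or.prems(4) by blast
    show "A1 \<union> B1 \<subseteq> X" using A1(2) B1(2) AB(1) by blast
    show "finite (A1 \<union> B1 - Y0)" using s f finite_subset by blast
    have "card (A1 \<union> B1 - Y0) \<le> card ((A1 - Y0 \<inter> A) \<union> (B1 - Y0 \<inter> B))"
      using s f by (rule card_mono[rotated])
    also have "\<dots> \<le> card (A1 - Y0 \<inter> A) + card (B1 - Y0 \<inter> B)" by (rule card_Un_le)
    finally show "card (A1 \<union> B1 - Y0) \<le> natoms (Or a b) * card M ^ k"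
      using A1(4) B1(4) by (simp add: add_mult_distrib)
  next
    fix Y assume Y: "A1 \<union> B1 \<subseteq> Y" "Y \<subseteq> X"
    have "sat M (Y \<inter> A) a" by (rule A1(5)[rule_format]) (use Y A1(2) in blast)+
    moreover have "sat M (Y \<inter> B) b" by (rule B1(5)[rule_format]) (use Y B1(2) in blast)+
    moreover have "Y = (Y \<inter> A) \<union> (Y \<inter> B)" using Y(2) AB(1) by blast
    ultimately show "sat M Y (Or a b)" unfolding sat.simps by blast
  qed
next
  case (And a b)
  have wfa: "wf_fml k \<D> a" and wfb: "wf_fml k \<D> b" using And.prems(1) by auto
  have satA: "sat M X a" and satB: "sat M X b" using And.prems(3) by auto
  obtain Y1 where Y1: "Y0 \<subseteq> Y1" "Y1 \<subseteq> X" "finite (Y1 - Y0)"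
      "card (Y1 - Y0) \<le> natoms a * card M ^ k" "\<forall>Y. Y1 \<subseteq> Y \<longrightarrow> Y \<subseteq> X \<longrightarrow> sat M Y a"
    using And.IH(1)[OF wfa And.prems(2) satA And.prems(4)] by blast
  obtain Y2 where Y2: "Y1 \<subseteq> Y2" "Y2 \<subseteq> X" "finite (Y2 - Y1)"
      "card (Y2 - Y1) \<le> natoms b * card M ^ k" "\<forall>Y. Y2 \<subseteq> Y \<longrightarrow> Y \<subseteq> X \<longrightarrow> sat M Y b"
    using And.IH(2)[OF wfb And.prems(2) satB Y1(2)] by blast
  have s: "Y2 - Y0 \<subseteq> (Y1 - Y0) \<union> (Y2 - Y1)" by blast
  have f: "finite ((Y1 - Y0) \<union> (Y2 - Y1))" using Y1(3) Y2(3) by blast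
  show ?case
  proof (intro exI[of _ Y2] conjI allI impI)
    show "Y0 \<subseteq> Y2" using Y1(1) Y2(1) by blast
    show "Y2 \<subseteq> X" using Y2(2) by blast
    show "finite (Y2 - Y0)" using s f finite_subset by blast
    have "card (Y2 - Y0) \<le> card ((Y1 - Y0) \<union> (Y2 - Y1))"
      using s f by (rule card_mono[rotated])
    also have "\<dots> \<le> card (Y1 - Y0) + card (Y2 - Y1)" by (rule card_Un_le)
    finally show "card (Y2 - Y0) \<le> natoms (And a b) * card M ^ k"
      using Y1(4) Y2(4) by (simp add: add_mult_distrib)
  next
    fix Y assume Y: "Y2 \<subseteq> Y" "Y \<subseteq> X"
    have "sat M Y a" by (rule Y1(5)[rule_format]) (use Y Y2(1) in blast)+
    moreover have "sat M Y b" by (rule Y2(5)[rule_format]) (use Y in blast)+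
    ultimately show "sat M Y (And a b)" by simp
  qed
next
  case (CDisj a b)
  have wfa: "wf_fml k \<D> a" and wfb: "wf_fml k \<D> b" using CDisj.prems(1) by auto
  show ?case
  proof (cases "sat M X a")
    case True
    then obtain Y1 where Y1: "Y0 \<subseteq> Y1" "Y1 \<subseteq> X" "finite (Y1 - Y0)"
      "card (Y1 - Y0) \<le> natoms a * card M ^ k" "\<forall>Y. Y1 \<subseteq> Y \<longrightarrow> Y \<subseteq> X \<longrightarrow> sat M Y a"
      using CDisj.IH(1)[OF wfa CDisj.prems(2) True CDisj.prems(4)] by blast
    show ?thesis
    proof (intro exI[of _ Y1] conjI allI impI)
      show "card (Y1 - Y0) \<le> natoms (CDisj a b) * card M ^ k"
        using Y1(4) by (rule order_trans) (simp add: add_mult_distrib)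
      fix Y assume "Y1 \<subseteq> Y" "Y \<subseteq> X"
      then have "sat M Y a" using Y1(5) by blast
      then show "sat M Y (CDisj a b)" by simp
    qed (use Y1 in blast)+
  next
    case False
    then have "sat M X b" using CDisj.prems(3) by simp
    then obtain Y1 where Y1: "Y0 \<subseteq> Y1" "Y1 \<subseteq> X" "finite (Y1 - Y0)"
      "card (Y1 - Y0) \<le> natoms b * card M ^ k" "\<forall>Y. Y1 \<subseteq> Y \<longrightarrow> Y \<subseteq> X \<longrightarrow> sat M Y b"
      using CDisj.IH(2)[OF wfb CDisj.prems(2) \<open>sat M X b\<close> CDisj.prems(4)] by blast
    show ?thesis
    proof (intro exI[of _ Y1] conjI allI impI)
      show "card (Y1 - Y0) \<le> natoms (CDisj a b) * card M ^ k"
        using Y1(4) by (rule order_trans) (simp add: add_mult_distrib)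
      fix Y assume "Y1 \<subseteq> Y" "Y \<subseteq> X"
      then have "sat M Y b" using Y1(5) by blast
      then show "sat M Y (CDisj a b)" by simp
    qed (use Y1 in blast)+
  qed
next
  case (Ex v a)
  have wfa: "wf_fml k \<D> a" using Ex.prems(1) by simp
  from Ex.prems(3) obtain F where F: "\<forall>s\<in>X. F s \<noteq> {} \<and> F s \<subseteq> M"
    "sat M {s(v := Some m) | s m. s \<in> X \<and> m \<in> F s} a" by auto
  define XF where "XF = {s(v := Some m) | s m. s \<in> X \<and> m \<in> F s}"
  define Y0F where "Y0F = {s(v := Some m) | s m. s \<in> Y0 \<and> m \<in> F s}"
  have ranXF: "\<forall>s\<in>XF. ran s \<subseteq> M"
  proof
    fix z assume "z \<in> XF"
    then obtain s m where "z = s(v := Some m)" "s \<in> X" "m \<in> F s" unfolding XF_def by blast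
    then show "ran z \<subseteq> M" using ran_upd_sub[of s v m] F(1) Ex.prems(2) by blast
  qed
  have satXF: "sat M XF a" using F(2) unfolding XF_def .
  have "Y0F \<subseteq> XF" unfolding Y0F_def XF_def using Ex.prems(4) by blast
  then obtain Z1 where Z1: "Y0F \<subseteq> Z1" "Z1 \<subseteq> XF" "finite (Z1 - Y0F)"
      "card (Z1 - Y0F) \<le> natoms a * card M ^ k" "\<forall>Y. Z1 \<subseteq> Y \<longrightarrow> Y \<subseteq> XF \<longrightarrow> sat M Y a"
    using Ex.IH[OF wfa ranXF satXF \<open>Y0F \<subseteq> XF\<close>] by blast
  define P where "P z = (SOME s. s \<in> X \<and> (\<exists>m\<in>F s. z = s(v := Some m)))" for z
  have P: "P z \<in> X \<and> (\<exists>m\<in>F (P z). z = (P z)(v := Some m))" if "z \<in> XF" for z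
  proof -
    have "\<exists>s. s \<in> X \<and> (\<exists>m\<in>F s. z = s(v := Some m))" using that unfolding XF_def by blast
    then show ?thesis unfolding P_def by (rule someI_ex)
  qed
  let ?Y1 = "Y0 \<union> P ` (Z1 - Y0F)"
  show ?case
  proof (intro exI[of _ ?Y1] conjI allI impI)
    show "Y0 \<subseteq> ?Y1" by blast
    show "?Y1 \<subseteq> X" using Ex.prems(4) P Z1(2) by blast
    have s: "?Y1 - Y0 \<subseteq> P ` (Z1 - Y0F)" by blast
    show "finite (?Y1 - Y0)" using finite_subset[OF s] Z1(3) by simp
    have "card (?Y1 - Y0) \<le> card (P ` (Z1 - Y0F))" by (rule card_mono[OF _ s]) (use Z1(3) in simp)
    also have "\<dots> \<le> card (Z1 - Y0F)" by (rule card_image_le) (use Z1(3) in simp)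
    finally show "card (?Y1 - Y0) \<le> natoms (Ex v a) * card M ^ k" using Z1(4) by simp
  next
    fix Y assume Y: "?Y1 \<subseteq> Y" "Y \<subseteq> X"
    define YF where "YF = {s(v := Some m) | s m. s \<in> Y \<and> m \<in> F s}"
    have "Z1 \<subseteq> YF"
    proof
      fix z assume z: "z \<in> Z1"
      show "z \<in> YF"
      proof (cases "z \<in> Y0F")
        case True then show ?thesis using Y unfolding Y0F_def YF_def by blast
      next
        case False
        then have "P z \<in> Y" using Y z by blast
        moreover have "\<exists>m\<in>F (P z). z = (P z)(v := Some m)" using P z Z1(2) by blast
        ultimately show ?thesis unfolding YF_def by blast
      qed
    qed
    moreover have "YF \<subseteq> XF" using Y unfolding YF_def XF_def by blast
    ultimately have "sat M YF a" using Z1(5) by blast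
    then show "sat M Y (Ex v a)" using F Y unfolding YF_def by auto
  qed
next
  case (All v a)
  have wfa: "wf_fml k \<D> a" using All.prems(1) by simp
  define XF where "XF = {s(v := Some m) | s m. s \<in> X \<and> m \<in> M}"
  define Y0F where "Y0F = {s(v := Some m) | s m. s \<in> Y0 \<and> m \<in> M}"
  have ranXF: "\<forall>s\<in>XF. ran s \<subseteq> M"
  proof
    fix z assume "z \<in> XF"
    then obtain s m where "z = s(v := Some m)" "s \<in> X" "m \<in> M" unfolding XF_def by blast
    then show "ran z \<subseteq> M" using ran_upd_sub[of s v m] All.prems(2) by blast
  qed
  have satXF: "sat M XF a" using All.prems(3) unfolding XF_def by simp
  have "Y0F \<subseteq> XF" unfolding Y0F_def XF_def using All.prems(4) by blast
  then obtain Z1 where Z1: "Y0F \<subseteq> Z1" "Z1 \<subseteq> XF" "finite (Z1 - Y0F)"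
      "card (Z1 - Y0F) \<le> natoms a * card M ^ k" "\<forall>Y. Z1 \<subseteq> Y \<longrightarrow> Y \<subseteq> XF \<longrightarrow> sat M Y a"
    using All.IH[OF wfa ranXF satXF \<open>Y0F \<subseteq> XF\<close>] by blast
  define P where "P z = (SOME s. s \<in> X \<and> (\<exists>m\<in>M. z = s(v := Some m)))" for z
  have P: "P z \<in> X \<and> (\<exists>m\<in>M. z = (P z)(v := Some m))" if "z \<in> XF" for z
  proof -
    have "\<exists>s. s \<in> X \<and> (\<exists>m\<in>M. z = s(v := Some m))" using that unfolding XF_def by blast
    then show ?thesis unfolding P_def by (rule someI_ex)
  qed
  let ?Y1 = "Y0 \<union> P ` (Z1 - Y0F)"
  show ?case
  proof (intro exI[of _ ?Y1] conjI allI impI)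
    show "Y0 \<subseteq> ?Y1" by blast
    show "?Y1 \<subseteq> X" using All.prems(4) P Z1(2) by blast
    have s: "?Y1 - Y0 \<subseteq> P ` (Z1 - Y0F)" by blast
    show "finite (?Y1 - Y0)" using finite_subset[OF s] Z1(3) by simp
    have "card (?Y1 - Y0) \<le> card (P ` (Z1 - Y0F))" by (rule card_mono[OF _ s]) (use Z1(3) in simp)
    also have "\<dots> \<le> card (Z1 - Y0F)" by (rule card_image_le) (use Z1(3) in simp)
    finally show "card (?Y1 - Y0) \<le> natoms (All v a) * card M ^ k" using Z1(4) by simp
  next
    fix Y assume Y: "?Y1 \<subseteq> Y" "Y \<subseteq> X"
    define YF where "YF = {s(v := Some m) | s m. s \<in> Y \<and> m \<in> M}"
    have "Z1 \<subseteq> YF"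
    proof
      fix z assume z: "z \<in> Z1"
      show "z \<in> YF"
      proof (cases "z \<in> Y0F")
        case True then show ?thesis using Y unfolding Y0F_def YF_def by blast
      next
        case False
        then have "P z \<in> Y" using Y z by blast
        moreover have "\<exists>m\<in>M. z = (P z)(v := Some m)" using P z Z1(2) by blast
        ultimately show ?thesis unfolding YF_def by blast
      qed
    qed
    moreover have "YF \<subseteq> XF" using Y unfolding YF_def XF_def by blast
    ultimately have "sat M YF a" using Z1(5) by blast
    then show "sat M Y (All v a)" unfolding YF_def by simp
  qed
qed


lemma team_rel_image: "team_rel X w = (\<lambda>s. map (\<lambda>x. the (s x)) w) ` X"
  unfolding team_rel_def by blast

theorem mainTheorem3:
  fixes \<D> :: "('a set \<times> 'a list set) set set" and k k' :: nat
  assumes "infinite (UNIV :: 'a set)"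
    and "k < k'"
    and "\<forall>D\<in>\<D>. is_dep_notion k D \<and> upwards_closed k D"
  shows "\<not> definable k \<D> k' (totality k')"
proof
  assume "definable k \<D> k' (totality k')"
  then obtain \<theta> vs where th: "wf_fml k \<D> \<theta>" "length vs = k'" "distinct vs"
    and eqv: "\<forall>M V X. M \<noteq> {} \<longrightarrow> finite V \<longrightarrow> set vs \<subseteq> V \<longrightarrow> is_team M V X \<longrightarrow>
         (totality k' M (team_rel X vs) \<longleftrightarrow> sat M X \<theta>)"
    unfolding definable_def by blast
  define c where "c = natoms \<theta>"
  define n where "n = c + 2"
  have inf: "infinite (UNIV - {the None :: 'a})" using assms(1) by simp
  obtain B where B: "finite B" "card B = n - 1" "B \<subseteq> UNIV - {the None :: 'a}"
    using infinite_arbitrarily_large[OF inf] by blast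
  define M where "M = insert (the None) B"
  have finM: "finite M" using B(1) unfolding M_def by simp
  have noneM: "the None \<in> M" unfolding M_def by simp
  have "the None \<notin> B" using B(3) by blast
  then have cardM: "card M = n" unfolding M_def using B(1,2) n_def by simp
  have Mne: "M \<noteq> {}" using noneM by blast
  define X where "X = {s. dom s = set vs \<and> ran s \<subseteq> M}"
  have ranX: "\<forall>s\<in>X. ran s \<subseteq> M" unfolding X_def by blast
  have teamX: "is_team M (set vs) X" unfolding is_team_def X_def by blast
  have total: "team_rel X vs = tuples M k'"
  proof
    show "team_rel X vs \<subseteq> tuples M k'" using team_rel_tuples[OF ranX noneM, of vs] th(2) by simp
    show "tuples M k' \<subseteq> team_rel X vs"
    proof
      fix t assume t: "t \<in> tuples M k'"
      then have lt: "length t = length vs" and st: "set t \<subseteq> M" using th(2) unfolding tuples_def by auto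
      define s where "s = map_of (zip vs t)"
      have "s \<in> X" unfolding X_def s_def using lt st th(3) by (simp add: ran_map_of_zip)
      moreover have "map (\<lambda>x. the (s x)) vs = t"
        by (rule nth_equalityI) (use lt th(3) in \<open>auto simp: s_def map_of_zip_nth\<close>)
      ultimately show "t \<in> team_rel X vs" by (rule team_rel_memI)
    qed
  qed
  have satX: "sat M X \<theta>" using eqv[rule_format, OF Mne finite_set subset_refl teamX] total unfolding totality_def by simp
  obtain Y1 where Y1: "{} \<subseteq> Y1" "Y1 \<subseteq> X" "finite (Y1 - {})"
      "card (Y1 - {}) \<le> natoms \<theta> * card M ^ k" "\<forall>Y. Y1 \<subseteq> Y \<longrightarrow> Y \<subseteq> X \<longrightarrow> sat M Y \<theta>"
    using key[OF finM noneM th(1) ranX satX empty_subsetI] by blast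
  have satY: "sat M Y1 \<theta>" using Y1(5)[rule_format, OF subset_refl Y1(2)] .
  have teamY: "is_team M (set vs) Y1" using Y1(2) unfolding is_team_def X_def by auto
  have "totality k' M (team_rel Y1 vs)" using eqv[rule_format, OF Mne finite_set subset_refl teamY] satY by simp
  then have "team_rel Y1 vs = tuples M k'" unfolding totality_def .
  then have "n ^ k' = card (team_rel Y1 vs)" using card_tuples[OF finM] cardM by simp
  also have "\<dots> \<le> card Y1" unfolding team_rel_image by (rule card_image_le) (use Y1(3) in simp)
  also have "\<dots> \<le> c * n ^ k" using Y1(4) cardM c_def by simp
  also have "\<dots> < n * n ^ k" using n_def by simp
  also have "\<dots> = n ^ Suc k" by simp
  also have "\<dots> \<le> n ^ k'" by (rule power_increasing) (use assms(2) n_def in auto)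
  finally show False by simp
qed

end
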